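(* The following holds for $x>0$ and integers $n,m$ with $n>m$: \begin{equation*} 0<-i\frac{P_n^m (ix)}{P_{n-1}^m (ix)}<\frac{n}{n-m}\left[x+\sqrt{1+x^2-\frac{m^2}{n^2}}\right],\quad n-m \mbox{ odd}, \end{equation*} \begin{equation*} \frac{1}{n-m}\left[nx+(n-1)\sqrt{1+x^2-\frac{m^2}{(n-1)^2}}\right]<-i\frac{P_n^m (ix)}{P_{n-1}^m (ix)},\quad n-m \mbox{ even}, \end{equation*} \begin{equation*} \frac{P_n^m (ix)^2}{P_{n-1}^m (ix) P_{n+1}^m (ix)}<1+\frac{1}{n-m},\quad n-m \mbox{ odd}. \end{equation*}
   Context: $P_n^m(z)$ denotes the associated Legendre function of the first kind of degree $n$ and order $m$ (as in the NIST Digital Library of Mathematical Functions, Chapter 14), evaluated at the imaginary argument $z=ix$ with $x>0$ (oblate Legendre functions); $i$ is the imaginary unit. *)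

theory Defs
  imports "HOL-Analysis.Analysis" "HOL-Computational_Algebra.Polynomial"
begin

definition legendre_poly :: "nat \<Rightarrow> complex poly" where
  "legendre_poly n = smult (1 / (2 ^ n * fact n)) ((pderiv ^^ n) ([:-1, 0, 1:] ^ n))"

text \<open>Associated Legendre function of the first kind P_n^m(z) for integer degree n and
  integer order m \<ge> 0 (DLMF 14.6.5, continued to the cut plane as in DLMF 14.21):
  P_n^m(z) = (z^2-1)^(m/2) d^m P_n(z)/dz^m, with (z^2-1)^(m/2) = (z+1)^(m/2)(z-1)^(m/2),
  principal branches.\<close>
definition assoc_legendreP :: "nat \<Rightarrow> nat \<Rightarrow> complex \<Rightarrow> complex" where
  "assoc_legendreP n m z =
     (csqrt (z + 1) * csqrt (z - 1)) ^ m * poly ((pderiv ^^ m) (legendre_poly n)) z"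

end

theory Submission
  imports Defs
begin

definition PX :: "complex poly" where "PX = [:0,1:]"

definition WW :: "complex poly" where "WW = PX * PX - 1"
lemma WW_eq: "WW = PX * PX - 1" by (simp add: WW_def)
lemma WW_lit: "[:-1,0,1:] = WW"
  by (simp add: one_pCons PX_def WW_def)

lemma hp_Suc: "(pderiv ^^ Suc k) p = pderiv ((pderiv ^^ k) p)" by simp
lemma hp_Suc': "(pderiv ^^ Suc k) p = (pderiv ^^ k) (pderiv p)"
  by (simp add: funpow_Suc_right del: funpow.simps)

lemma hp_diff: "(pderiv ^^ k) (p - q :: 'a::idom poly) = (pderiv ^^ k) p - (pderiv ^^ k) q"
  by (induction k) (auto simp: pderiv_diff)

lemma hp_ofnat: "(pderiv ^^ k) (of_nat a * (p :: 'a::idom poly)) = of_nat a * (pderiv ^^ k) p"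
  by (induction k) (auto simp: pderiv_mult)

lemma pderiv_PX[simp]: "pderiv PX = 1" by (simp add: pderiv_pCons PX_def)

lemma hp_X_Suc: "(pderiv ^^ Suc k) (PX * g) = PX * (pderiv ^^ Suc k) g + of_nat (Suc k) * (pderiv ^^ k) g"
proof (induction k)
  case 0 then show ?case by (simp add: pderiv_mult pderiv_pCons)
next
  case (Suc k)
  have "(pderiv ^^ Suc (Suc k)) (PX * g) = pderiv ((pderiv ^^ Suc k) (PX * g))" by (rule hp_Suc)
  also have "\<dots> = PX * (pderiv ^^ Suc (Suc k)) g + of_nat (Suc (Suc k)) * (pderiv ^^ Suc k) g"
    unfolding Suc by (simp add: pderiv_add pderiv_mult pderiv_pCons algebra_simps)
  finally show ?case .
qed

lemma hp_X: "(pderiv ^^ k) (PX * g) = PX * (pderiv ^^ k) g + of_nat k * (pderiv ^^ (k-1)) g"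
  by (cases k) (simp_all only: hp_X_Suc, simp_all)

lemma hp_W_SS: "(pderiv ^^ Suc (Suc k)) ((PX*PX-1) * g) = (PX*PX-1) * (pderiv ^^ Suc (Suc k)) g
   + of_nat (2 * Suc (Suc k)) * (PX * (pderiv ^^ Suc k) g) + of_nat (Suc (Suc k) * Suc k) * (pderiv ^^ k) g"
proof (induction k)
  case 0 then show ?case by (simp add: pderiv_mult pderiv_diff pderiv_add algebra_simps)
next
  case (Suc k)
  show ?case
    apply (subst hp_Suc)
    unfolding Suc by (simp add: pderiv_add pderiv_mult pderiv_diff algebra_simps)
qed

lemma smult_of_nat: "smult (of_nat k) p = of_nat k * p"
  by (simp add: of_nat_poly)

lemma pderiv_WW: "pderiv WW = 2 * PX"
  by (simp add: WW_eq pderiv_diff pderiv_mult)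

definition RR :: "nat \<Rightarrow> complex poly" where "RR n = (pderiv ^^ n) (WW ^ n)"
definition SS :: "nat \<Rightarrow> complex poly" where "SS n = (pderiv ^^ (n-1)) (WW ^ n)"

lemma I1: "RR (Suc n) = of_nat (2 * Suc n) * (PX * RR n + of_nat n * SS n)"
proof -
  have "RR (Suc n) = (pderiv ^^ n) (pderiv (WW ^ Suc n))" unfolding RR_def by (rule hp_Suc')
  also have "pderiv (WW ^ Suc n) = of_nat (2 * Suc n) * (PX * WW ^ n)"
    by (simp only: pderiv_power_Suc pderiv_WW smult_of_nat) (simp add: algebra_simps)
  finally show ?thesis by (simp only: hp_ofnat hp_X RR_def SS_def)
qed

lemma I2: "RR (Suc (Suc j)) = WW * pderiv (RR (Suc j)) + of_nat (2 * Suc (Suc j)) * (PX * RR (Suc j))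
    + of_nat (Suc (Suc j) * Suc j) * SS (Suc j)"
proof -
  have "RR (Suc (Suc j)) = (pderiv ^^ Suc (Suc j)) ((PX*PX-1) * WW ^ Suc j)"
    unfolding RR_def by (subst power_Suc) (simp only: WW_eq)
  also have "\<dots> = WW * pderiv (RR (Suc j)) + of_nat (2 * Suc (Suc j)) * (PX * RR (Suc j))
    + of_nat (Suc (Suc j) * Suc j) * SS (Suc j)"
    using hp_W_SS[of j "WW ^ Suc j"] unfolding RR_def SS_def WW_eq[symmetric] hp_Suc[symmetric] diff_Suc_1 .
  finally show ?thesis .
qed

lemma R0: "RR 0 = 1" by (simp add: RR_def)
lemma R1: "RR (Suc 0) = 2 * PX" by (simp add: RR_def pderiv_WW)

lemma pderiv_SS: "pderiv (SS (Suc j)) = RR (Suc j)"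
  by (simp add: SS_def RR_def del: funpow.simps) (simp only: hp_Suc[symmetric])

lemma BR: "RR (Suc n) = of_nat (2 * Suc n) * PX * RR n + 2 * WW * pderiv (RR n)"
proof (cases n)
  case 0 then show ?thesis by (simp add: R0 R1)
next
  case (Suc j)
  have e0: "WW * pderiv (RR (Suc j)) = RR (Suc (Suc j)) - of_nat (2 * Suc (Suc j)) * (PX * RR (Suc j))
    - of_nat (Suc (Suc j) * Suc j) * SS (Suc j)"
    using I2[of j] by (simp add: algebra_simps)
  have e1: "WW * pderiv (RR (Suc j)) = of_nat (Suc (Suc j) * Suc j) * SS (Suc j)"
    apply (subst e0) apply (subst I1[of "Suc j"]) by (simp add: algebra_simps)
  show ?thesis unfolding Suc I1[of "Suc j"] mult.assoc e1 by (simp add: algebra_simps)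
qed

lemma AR: "pderiv (RR (Suc n)) = of_nat (2 * Suc n) * (of_nat (Suc n) * RR n + PX * pderiv (RR n))"
proof (cases n)
  case 0 then show ?thesis by (simp add: R0 R1 pderiv_mult)
next
  case (Suc j)
  show ?thesis unfolding Suc I1[of "Suc j"]
    by (simp add: pderiv_mult pderiv_add pderiv_SS algebra_simps)
qed

abbreviation "LP \<equiv> legendre_poly"
definition aa :: "nat \<Rightarrow> complex" where "aa n = 1 / (2 ^ n * fact n)"

lemma LP_RR: "LP n = smult (aa n) (RR n)"
  by (simp add: legendre_poly_def aa_def RR_def WW_lit)

lemma aa_Suc: "aa (Suc n) * of_nat (2 * Suc n) = aa n"
proof -
  have a: "(of_nat (Suc n)::complex) \<noteq> 0" by (rule of_nat_neq_0)
  have b: "(fact n::complex) \<noteq> 0" by simp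
  have c: "(fact (Suc n)::complex) = of_nat (Suc n) * fact n" by (simp add: fact_Suc)
  have d: "(of_nat (2 * Suc n)::complex) = 2 * of_nat (Suc n)" by (simp only: of_nat_mult of_nat_numeral)
  show ?thesis unfolding aa_def c d using a b by (simp add: field_simps del: of_nat_Suc)
qed

lemma smult_aa: "smult (aa (Suc n)) (of_nat (2 * Suc n) * Y) = smult (aa n) Y"
proof -
  have "of_nat (2 * Suc n) * Y = smult (of_nat (2 * Suc n)) Y" by (simp only: smult_of_nat)
  then show ?thesis by (simp only: smult_smult aa_Suc)
qed

lemma LA: "pderiv (LP (Suc n)) = of_nat (Suc n) * LP n + PX * pderiv (LP n)"
proof -
  have "pderiv (LP (Suc n)) = smult (aa (Suc n)) (of_nat (2 * Suc n) * (of_nat (Suc n) * RR n + PX * pderiv (RR n)))"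
    by (simp only: LP_RR pderiv_smult AR)
  also have "\<dots> = smult (aa n) (of_nat (Suc n) * RR n + PX * pderiv (RR n))" by (rule smult_aa)
  also have "\<dots> = of_nat (Suc n) * LP n + PX * pderiv (LP n)"
    by (simp add: LP_RR pderiv_smult smult_add_right)
  finally show ?thesis .
qed

lemma LB: "of_nat (Suc n) * LP (Suc n) = of_nat (Suc n) * PX * LP n + WW * pderiv (LP n)"
proof -
  have e: "of_nat (Suc n) * RR (Suc n) = of_nat (2 * Suc n) * (of_nat (Suc n) * PX * RR n + WW * pderiv (RR n))"
    by (subst BR) (simp add: algebra_simps)
  have "of_nat (Suc n) * LP (Suc n) = smult (aa (Suc n)) (of_nat (Suc n) * RR (Suc n))"
    by (simp add: LP_RR)
  also have "\<dots> = smult (aa n) (of_nat (Suc n) * PX * RR n + WW * pderiv (RR n))"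
    unfolding e by (rule smult_aa)
  also have "\<dots> = of_nat (Suc n) * PX * LP n + WW * pderiv (LP n)"
    by (simp add: LP_RR pderiv_smult smult_add_right)
  finally show ?thesis .
qed

lemma LC: "WW * pderiv (LP (Suc n)) = of_nat (Suc n) * (PX * LP (Suc n) - LP n)"
proof -
  have b: "WW * pderiv (LP n) = of_nat (Suc n) * LP (Suc n) - of_nat (Suc n) * PX * LP n"
    using LB[of n] by (simp add: algebra_simps)
  have "WW * pderiv (LP (Suc n)) = of_nat (Suc n) * WW * LP n + PX * (WW * pderiv (LP n))"
    by (simp add: LA algebra_simps)
  also have "\<dots> = of_nat (Suc n) * (PX * LP (Suc n) - LP n)"
    unfolding b by (simp add: WW_eq algebra_simps)
  finally show ?thesis .
qed

lemma Bonnet: "of_nat (Suc (Suc j)) * LP (Suc (Suc j)) = of_nat (2 * Suc j + 1) * PX * LP (Suc j) - of_nat (Suc j) * LP j"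
  using LB[of "Suc j"] LC[of j] by (simp add: algebra_simps)

lemma Am: "(pderiv^^Suc m) (LP (Suc n)) = PX * (pderiv^^Suc m) (LP n) + of_nat (Suc n + m) * (pderiv^^m) (LP n)"
proof -
  have "(pderiv^^Suc m) (LP (Suc n)) = (pderiv^^m) (of_nat (Suc n) * LP n + PX * pderiv (LP n))"
    by (simp only: hp_Suc' LA)
  also have "\<dots> = of_nat (Suc n) * (pderiv^^m)(LP n) + (PX * (pderiv^^m)(pderiv (LP n))
      + of_nat m * (pderiv^^(m-1)) (pderiv (LP n)))"
    by (simp only: higher_pderiv_add hp_ofnat hp_X)
  also have "(pderiv^^m)(pderiv (LP n)) = (pderiv^^Suc m)(LP n)" by (simp only: hp_Suc')
  also have "of_nat m * (pderiv^^(m-1)) (pderiv (LP n)) = of_nat m * (pderiv^^m)(LP n)"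
    by (cases m) (simp_all del: funpow.simps add: hp_Suc'[symmetric])
  finally show ?thesis by (simp add: algebra_simps)
qed

lemma alg_step:
  fixes E2 E1 E0 D1 X :: "complex poly"
  assumes h1: "(of_nat (Suc (Suc j)) - of_nat m) * E2 = of_nat (2 * Suc j + 1) * (D1 + X * E1) - of_nat (Suc j + m) * E0"
    and h2: "E2 = X * E1 + of_nat (Suc (Suc j) + m) * D1"
  shows "(of_nat (Suc (Suc j)) - of_nat (Suc m)) * E2 = of_nat (2 * Suc j + 1) * X * E1 - of_nat (Suc j + Suc m) * E0"
proof -
  have nz: "(of_nat (Suc j + m) :: complex poly) \<noteq> 0"
    unfolding add_Suc by (rule of_nat_neq_0)
  have "of_nat (Suc j + m) * ((of_nat (Suc (Suc j)) - of_nat (Suc m)) * E2)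
      = of_nat (Suc j + m) * (of_nat (2 * Suc j + 1) * X * E1 - of_nat (Suc j + Suc m) * E0)"
    using h1 h2 by simp algebra
  then show ?thesis using nz by simp
qed

lemma Rec: "(of_nat (Suc (Suc j)) - of_nat m) * (pderiv^^m) (LP (Suc (Suc j)))
   = of_nat (2 * Suc j + 1) * PX * (pderiv^^m) (LP (Suc j)) - of_nat (Suc j + m) * (pderiv^^m) (LP j)"
proof (induction m arbitrary: j)
  case 0 show ?case using Bonnet[of j] by simp
next
  case (Suc m)
  have e: "pderiv ((of_nat (Suc (Suc j)) - of_nat m) * (pderiv^^m) (LP (Suc (Suc j))))
   = pderiv (of_nat (2 * Suc j + 1) * PX * (pderiv^^m) (LP (Suc j)) - of_nat (Suc j + m) * (pderiv^^m) (LP j))"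
    using Suc.IH[of j] by simp
  have h1: "(of_nat (Suc (Suc j)) - of_nat m) * (pderiv^^Suc m) (LP (Suc (Suc j)))
     = of_nat (2*Suc j+1) * ((pderiv^^m)(LP (Suc j)) + PX * (pderiv^^Suc m)(LP (Suc j)))
       - of_nat (Suc j + m) * (pderiv^^Suc m)(LP j)"
    using e by (simp add: pderiv_mult pderiv_diff algebra_simps del: of_nat_Suc of_nat_add)
  show ?case by (rule alg_step[OF h1 Am[of m "Suc j"]])
qed

lemma degree_WW: "degree WW = 2"
  unfolding WW_lit[symmetric] by simp

lemma WW_nz: "WW \<noteq> 0" using degree_WW by auto

lemma degree_RR: "degree (RR n) = n"
  unfolding RR_def degree_higher_pderiv degree_power_eq[OF WW_nz] degree_WW by simp

lemma aa_nz: "aa n \<noteq> 0" by (simp add: aa_def)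

lemma degree_LP: "degree (LP n) = n"
  by (simp add: LP_RR aa_nz degree_RR)

lemma hp_zero: fixes p :: "complex poly" assumes "degree p < m" shows "(pderiv ^^ m) p = 0"
proof (cases m)
  case 0 then show ?thesis using assms by simp
next
  case (Suc k)
  from assms have "degree ((pderiv ^^ k) p) = 0" by (simp add: degree_higher_pderiv Suc)
  then show ?thesis by (simp add: Suc pderiv_eq_0_iff)
qed

lemma hp_nz: fixes p :: "complex poly" assumes "degree p = m" "p \<noteq> 0" shows "(pderiv ^^ m) p \<noteq> 0"
proof (cases m)
  case 0 then show ?thesis using assms by simp
next
  case (Suc k)
  from assms(1) have "degree ((pderiv ^^ k) p) = 1" by (simp add: degree_higher_pderiv Suc)
  then show ?thesis by (simp add: Suc pderiv_eq_0_iff)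
qed

definition cc :: "nat \<Rightarrow> complex" where "cc m = poly ((pderiv ^^ m) (LP m)) 0"

lemma DL_const: "(pderiv ^^ m) (LP m) = [:cc m:]"
proof -
  have "degree ((pderiv ^^ m) (LP m)) = 0" by (simp add: degree_higher_pderiv degree_LP)
  then obtain a where "(pderiv ^^ m) (LP m) = [:a:]" using degree_eq_zeroE by blast
  then show ?thesis by (simp add: cc_def)
qed

lemma cc_nz: "cc m \<noteq> 0"
proof -
  have "LP m \<noteq> 0"
  proof
    assume "LP m = 0" then have "RR m = 0" using aa_nz by (simp add: LP_RR)
    then show False using degree_RR[of m] R0 by (cases m) auto
  qed
  then have "(pderiv ^^ m) (LP m) \<noteq> 0" by (intro hp_nz degree_LP)
  then show ?thesis using DL_const by simp
qed

fun qq :: "nat \<Rightarrow> nat \<Rightarrow> real poly" where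
  "qq m 0 = 1"
| "qq m (Suc 0) = [:0, of_nat (2*m+1):]"
| "qq m (Suc (Suc k)) = smult (1 / of_nat (k+2)) (smult (of_nat (2*m+2*k+3)) ([:0,1:] * qq m (Suc k))
      + smult (of_nat (2*m+k+1)) (qq m k))"

lemma qq_SS: "poly (qq m (Suc (Suc k))) x = ((2*m+2*k+3) * x * poly (qq m (Suc k)) x + (2*m+k+1) * poly (qq m k) x) / (k+2)"
  by (simp add: field_simps)

lemma poly_PX[simp]: "poly PX z = z" by (simp add: PX_def)

lemma LP0: "LP 0 = 1" by (simp add: LP_RR R0 aa_def)
lemma LP1: "LP (Suc 0) = PX" by (simp add: LP_RR R1 aa_def mult_smult_left[symmetric] numeral_poly)

lemma link_base1: "poly ((pderiv^^m) (LP (Suc m))) z = cc m * of_nat (2*m+1) * z"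
proof (cases m)
  case 0 then show ?thesis by (simp add: LP1 cc_def LP0)
next
  case (Suc m')
  have z: "(pderiv^^Suc m') (LP m') = 0" by (rule hp_zero) (simp add: degree_LP)
  have "(of_nat (Suc (Suc m')) - of_nat (Suc m')) * (pderiv^^Suc m') (LP (Suc (Suc m')))
   = of_nat (2 * Suc m' + 1) * PX * (pderiv^^Suc m') (LP (Suc m')) - of_nat (Suc m' + Suc m') * (pderiv^^Suc m') (LP m')"
    by (rule Rec)
  then have "(pderiv^^Suc m') (LP (Suc (Suc m'))) = of_nat (2 * Suc m' + 1) * PX * [:cc (Suc m'):]"
    using DL_const[of "Suc m'"] z by simp
  then show ?thesis using Suc by (simp add: algebra_simps)
qed

lemma link_pair: "poly ((pderiv^^m) (LP (m+k))) (\<i> * of_real x) = cc m * \<i>^k * of_real (poly (qq m k) x)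
  \<and> poly ((pderiv^^m) (LP (m+Suc k))) (\<i> * of_real x) = cc m * \<i>^(Suc k) * of_real (poly (qq m (Suc k)) x)"
proof (induction k)
  case 0
  show ?case using link_base1[of m "\<i> * of_real x"] DL_const[of m] by (simp add: algebra_simps)
next
  case (Suc k)
  let ?z = "\<i> * complex_of_real x"
  have r: "(of_nat (Suc (Suc (m+k))) - of_nat m) * (pderiv^^m) (LP (Suc (Suc (m+k))))
   = of_nat (2 * Suc (m+k) + 1) * PX * (pderiv^^m) (LP (Suc (m+k))) - of_nat (Suc (m+k) + m) * (pderiv^^m) (LP (m+k))"
    by (rule Rec)
  have "of_nat (k+2) * poly ((pderiv^^m) (LP (m + Suc (Suc k)))) ?z
     = of_nat (2*m+2*k+3) * ?z * (cc m * \<i>^(Suc k) * of_real (poly (qq m (Suc k)) x))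
       - of_nat (2*m+k+1) * (cc m * \<i>^k * of_real (poly (qq m k) x))"
    using arg_cong[OF r, of "\<lambda>p. poly p ?z"] Suc.IH by (simp add: algebra_simps)
  then have "poly ((pderiv^^m) (LP (m + Suc (Suc k)))) ?z
     = (of_nat (2*m+2*k+3) * ?z * (cc m * \<i>^(Suc k) * of_real (poly (qq m (Suc k)) x))
       - of_nat (2*m+k+1) * (cc m * \<i>^k * of_real (poly (qq m k) x))) / of_nat (k+2)"
    by (simp add: field_simps del: of_nat_Suc of_nat_add)
  also have "\<dots> = cc m * \<i>^(Suc (Suc k)) * of_real (poly (qq m (Suc (Suc k))) x)"
    unfolding qq_SS by (simp add: field_simps power_Suc)
  finally show ?case using Suc.IH by simp
qed

lemma pderiv_qq_SS: "poly (pderiv (qq m (Suc (Suc k)))) x = ((2*m+2*k+3) * (poly (qq m (Suc k)) x + x * poly (pderiv (qq m (Suc k))) x)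
   + (2*m+k+1) * poly (pderiv (qq m k)) x) / (k+2)"
  by (simp add: pderiv_smult pderiv_add pderiv_mult pderiv_pCons field_simps)

lemma qq_deriv: "(1 + x^2) * poly (pderiv (qq m (Suc k))) x = (k+1) * x * poly (qq m (Suc k)) x + (2*m+k+1) * poly (qq m k) x
  \<and> (1 + x^2) * poly (pderiv (qq m k)) x = (k+1) * poly (qq m (Suc k)) x - (2*m+k+1) * x * poly (qq m k) x"
proof (induction k)
  case 0 show ?case by (simp add: pderiv_pCons algebra_simps power2_eq_square)
next
  case (Suc k)
  note A = conjunct1[OF Suc.IH] and B = conjunct2[OF Suc.IH]
  have B': "(1 + x^2) * poly (pderiv (qq m (Suc k))) x = (Suc k+1) * poly (qq m (Suc (Suc k))) x - (2*m+Suc k+1) * x * poly (qq m (Suc k)) x"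
    unfolding A qq_SS by (simp add: field_simps)
  have A': "(1 + x^2) * poly (pderiv (qq m (Suc (Suc k)))) x = (Suc k+1) * x * poly (qq m (Suc (Suc k))) x + (2*m+Suc k+1) * poly (qq m (Suc k)) x"
  proof -
    have "(1 + x^2) * poly (pderiv (qq m (Suc (Suc k)))) x = ((2*m+2*k+3) * ((1+x^2) * poly (qq m (Suc k)) x + x * ((1+x^2) * poly (pderiv (qq m (Suc k))) x))
      + (2*m+k+1) * ((1+x^2) * poly (pderiv (qq m k)) x)) / (k+2)"
      unfolding pderiv_qq_SS by (simp add: field_simps)
    also have "\<dots> = (Suc k+1) * x * poly (qq m (Suc (Suc k))) x + (2*m+Suc k+1) * poly (qq m (Suc k)) x"
      unfolding A B qq_SS by (simp add: field_simps power2_eq_square)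
    finally show ?thesis .
  qed
  show ?case using A' B' by simp
qed

lemma alg_real:
  fixes uu vv a b t M mm kk :: real
  assumes ha: "(1+t^2)*a = (kk+1)*t*uu + (2*mm+kk+1)* vv"
    and hb: "(1+t^2)*b = (kk+1)*uu - (2*mm+kk+1)*t* vv"
  shows "2*mm*t*M*((kk+1)*uu^2 - 2*(mm+kk+1)*t*uu* vv - (2*mm+kk+1)* vv^2)
     + M*(2*(kk+1)*uu*((1+t^2)*a) - 2*(mm+kk+1)*((1+t^2)*uu* vv + t*(uu*((1+t^2)*b)) + t*(vv*((1+t^2)*a)))
          - 2*(2*mm+kk+1)* vv*((1+t^2)*b))
   = (1+t^2)*(-2*(mm+kk+1)*M*uu* vv)"
  unfolding ha hb by (simp add: algebra_simps power2_eq_square)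

definition Qf :: "nat \<Rightarrow> nat \<Rightarrow> real \<Rightarrow> real" where
  "Qf m k t = (k+1) * (poly (qq m (Suc k)) t)^2 - 2*(m+k+1)*t*poly (qq m (Suc k)) t * poly (qq m k) t
     - (2*m+k+1) * (poly (qq m k) t)^2"

lemma F_deriv: "DERIV (\<lambda>t. (1+t^2)^m * Qf m k t) t :> -2*(m+k+1)*(1+t^2)^m * poly (qq m (Suc k)) t * poly (qq m k) t"
proof -
  define uu where "uu = poly (qq m (Suc k)) t"
  define vv where "vv = poly (qq m k) t"
  define a where "a = poly (pderiv (qq m (Suc k))) t"
  define b where "b = poly (pderiv (qq m k)) t"
  have ha: "(1+t^2)*a = (real k+1)*t*uu + (2*real m+real k+1)* vv"
    using conjunct1[OF qq_deriv[of t m k]] unfolding a_def uu_def vv_def by simp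
  have hb: "(1+t^2)*b = (real k+1)*uu - (2*real m+real k+1)*t* vv"
    using conjunct2[OF qq_deriv[of t m k]] unfolding b_def uu_def vv_def by simp
  have dP: "DERIV (\<lambda>t. (1+t^2)^m) t :> real m * (1+t^2)^(m-1) * (2*t)"
    by (auto intro!: derivative_eq_intros)
  have "DERIV (\<lambda>t. (1+t^2)^m * Qf m k t) t :> real m * (1+t^2)^(m-1) * (2*t) * Qf m k t
     + (1+t^2)^m * (2*(k+1)*uu*a - 2*(m+k+1)*(uu* vv + t*(uu*b) + t*(vv*a)) - 2*(2*m+k+1)* vv*b)"
    unfolding Qf_def uu_def vv_def a_def b_def
    by (auto intro!: derivative_eq_intros simp: algebra_simps power2_eq_square)
  moreover have "real m * (1+t^2)^(m-1) * (2*t) * Qf m k t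
     + (1+t^2)^m * (2*(k+1)*uu*a - 2*(m+k+1)*(uu* vv + t*(uu*b) + t*(vv*a)) - 2*(2*m+k+1)* vv*b)
     = -2*(m+k+1)*(1+t^2)^m * uu * vv"
  proof -
    define c where "c = real m * (1+t^2)^(m-1)"
    have P: "(1+t^2) * c = real m * (1+t^2)^m"
      unfolding c_def by (cases m) auto
    have pos: "1 + t^2 > 0" by (simp add: add_pos_nonneg)
    have "(1+t^2) * (real m * (1+t^2)^(m-1) * (2*t) * Qf m k t
     + (1+t^2)^m * (2*(k+1)*uu*a - 2*(m+k+1)*(uu * vv + t*(uu*b) + t*(vv*a)) - 2*(2*m+k+1)* vv*b))
     = ((1+t^2) * c) * (2*t) * Qf m k t
     + (1+t^2)^m*(2*(real k+1)*uu*((1+t^2)*a) - 2*(real m+real k+1)*((1+t^2)*uu * vv + t*(uu*((1+t^2)*b)) + t*(vv*((1+t^2)*a)))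
          - 2*(2*real m+real k+1)* vv*((1+t^2)*b))"
      unfolding c_def[symmetric] by (simp add: algebra_simps)
    also have "\<dots> = 2*real m*t*(1+t^2)^m*((real k+1)*uu^2 - 2*(real m+real k+1)*t*uu * vv - (2*real m+real k+1)* vv^2)
     + (1+t^2)^m*(2*(real k+1)*uu*((1+t^2)*a) - 2*(real m+real k+1)*((1+t^2)*uu * vv + t*(uu*((1+t^2)*b)) + t*(vv*((1+t^2)*a)))
          - 2*(2*real m+real k+1)* vv*((1+t^2)*b))"
      unfolding P Qf_def uu_def[symmetric] vv_def[symmetric] by (simp add: algebra_simps)
    also have "\<dots> = (1+t^2) * (-2*(m+k+1)*(1+t^2)^m * uu * vv)"
      using alg_real[OF ha hb, of "(1+t^2)^m"] by (simp add: algebra_simps)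
    finally show ?thesis using pos by simp
  qed
  ultimately show ?thesis unfolding uu_def vv_def by simp
qed

lemma qq_pos: "x > 0 \<Longrightarrow> poly (qq m k) x > 0 \<and> poly (qq m (Suc k)) x > 0"
proof (induction k)
  case 0 then show ?case by simp
next
  case (Suc k)
  have a: "poly (qq m (Suc k)) x > 0" and b: "poly (qq m k) x > 0" using Suc by auto
  have c: "(2*real m+2*real k+3) * x * poly (qq m (Suc k)) x > 0" using a Suc.prems by simp
  have d: "(2*real m+real k+1) * poly (qq m k) x \<ge> 0" using b by simp
  have "poly (qq m (Suc (Suc k))) x > 0" unfolding qq_SS using c d by simp
  then show ?case using a by simp
qed

lemma qq_nonneg: "x \<ge> 0 \<Longrightarrow> poly (qq m k) x \<ge> 0 \<and> poly (qq m (Suc k)) x \<ge> 0"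
proof (induction k)
  case 0 then show ?case by simp
next
  case (Suc k)
  have a: "poly (qq m (Suc k)) x \<ge> 0" and b: "poly (qq m k) x \<ge> 0" using Suc by auto
  have c: "(2*real m+2*real k+3) * x * poly (qq m (Suc k)) x \<ge> 0" using a Suc.prems by simp
  have d: "(2*real m+real k+1) * poly (qq m k) x \<ge> 0" using b by simp
  have "poly (qq m (Suc (Suc k))) x \<ge> 0" unfolding qq_SS using c d by simp
  then show ?case using a by simp
qed

lemma qq_at0: "poly (qq m (2*j)) 0 > 0 \<and> poly (qq m (Suc (2*j))) 0 = 0"
proof (induction j)
  case 0 then show ?case by simp
next
  case (Suc j)
  have e1: "2 * Suc j = Suc (Suc (2*j))" by simp
  have e2: "Suc (2 * Suc j) = Suc (Suc (Suc (2*j)))" by simp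
  show ?case unfolding e1 e2 qq_SS using Suc.IH by (auto intro!: divide_pos_pos)
qed



lemma Q_neg:
  assumes "even k" "x \<ge> 0"
  shows "Qf m k x < 0"
proof -
  obtain j where k: "k = 2 * j" using assms(1) by blast
  let ?F = "\<lambda>t. (1+t^2)^m * Qf m k t"
  have "?F 0 \<ge> ?F x"
  proof (rule DERIV_nonpos_imp_nonincreasing[OF assms(2)])
    fix t :: real assume t: "0 \<le> t" "t \<le> x"
    have "poly (qq m k) t \<ge> 0" "poly (qq m (Suc k)) t \<ge> 0" using qq_nonneg[OF t(1)] by auto
    moreover have "(1+t^2)^m \<ge> (0::real)" by simp
    ultimately have "- 2 * (real m + real k + 1) * (1+t^2)^m * poly (qq m (Suc k)) t * poly (qq m k) t \<le> 0"
      by (intro mult_nonpos_nonneg) auto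
    then show "\<exists>y. DERIV ?F t :> y \<and> y \<le> 0" using F_deriv[of m k t] by (intro exI conjI)
  qed
  moreover have "?F 0 < 0"
    using qq_at0[of m j] unfolding k Qf_def by simp
  ultimately have "?F x < 0" by linarith
  moreover have "(1+x^2)^m > (0::real)" by (simp add: add_pos_nonneg)
  ultimately have A: "(1+x^2)^m * Qf m k x < 0" and B: "(1+x^2)^m > (0::real)" by auto
  show ?thesis
  proof (rule ccontr)
    assume "\<not> Qf m k x < 0"
    then have "Qf m k x \<ge> 0" by simp
    then have "(1+x^2)^m * Qf m k x \<ge> 0" using B by simp
    then show False using A by simp
  qed
qed



lemma sq_s:
  fixes m N :: nat and x :: real
  assumes "m < N"
  shows "sqrt (1 + x^2 - (real m)^2/(real N)^2) \<ge> 0"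
    "(sqrt (1 + x^2 - (real m)^2/(real N)^2))^2 = 1 + x^2 - (real m)^2/(real N)^2"
proof -
  have "(real m)^2 / (real N)^2 \<le> 1"
    using assms by (simp add: power_mono)
  moreover have "x^2 \<ge> 0" by simp
  ultimately have h: "1 + x^2 - (real m)^2/(real N)^2 \<ge> 0" by linarith
  then show "(sqrt (1 + x^2 - (real m)^2/(real N)^2))^2 = 1 + x^2 - (real m)^2/(real N)^2"
    by simp
  show "sqrt (1 + x^2 - (real m)^2/(real N)^2) \<ge> 0" using h by simp
qed

lemma ineq1:
  fixes m k :: nat and x u v :: real
  assumes x: "x > 0" and u: "u > 0" and v: "v > 0"
    and Q: "(real k+1) * u^2 - 2 * (real m+real k+1) * x * u * v - (2 * real m+real k+1) * v^2 < 0"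
  shows "u/v < real (m+k+1)/real(k+1) * (x + sqrt (1 + x^2 - (real m)^2/(real (m+k+1))^2))"
proof -
  define n where "n = real (m+k+1)"
  define s where "s = sqrt (1 + x^2 - (real m)^2/(real (m+k+1))^2)"
  define r where "r = u/v"
  have s0: "s \<ge> 0" and s2: "s^2 = 1 + x^2 - (real m)^2/n^2"
    using sq_s[of m "m+k+1" x] unfolding s_def n_def by auto
  have n0: "n > 0" unfolding n_def by simp
  have ur: "u = r * v" unfolding r_def using v by simp
  have Qr: "((real k+1) * r^2 - 2 * n * x * r - (2 * real m+real k+1)) * v^2 < 0"
    using Q unfolding ur n_def by (simp add: algebra_simps power2_eq_square)
  then have Qr': "(real k+1) * r^2 - 2 * n * x * r - (2 * real m+real k+1) < 0"
    using v by (simp add: mult_less_0_iff)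
  have ns2: "(n * s)^2 = n^2 + n^2 * x^2 - (real m)^2"
    using s2 n0 by (simp add: power_mult_distrib field_simps)
  have nm: "n^2 - (real m)^2 = (real k+1) * (2 * real m+real k+1)"
    unfolding n_def by (simp add: algebra_simps power2_eq_square)
  have main: "r < n/(real k+1) * (x+s)"
  proof (rule ccontr)
    assume "\<not> r < n/(real k+1) * (x+s)"
    then have "r \<ge> n/(real k+1) * (x+s)" by simp
    then have "(real k+1) * r \<ge> n * (x+s)" by (simp add: field_simps)
    then have h: "(real k+1) * r - n * x \<ge> n * s" by (simp add: algebra_simps)
    have "n * s \<ge> 0" using n0 s0 by simp
    then have "((real k+1) * r - n * x)^2 \<ge> (n * s)^2" using h by (simp add: power_mono)
    then have "(real k+1) * ((real k+1) * r^2 - 2 * n * x * r) \<ge> n^2 - (real m)^2"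
      unfolding ns2 by (simp add: algebra_simps power2_eq_square)
    then have "(real k+1) * ((real k+1) * r^2 - 2 * n * x * r) \<ge> (real k+1) * (2 * real m+real k+1)"
      unfolding nm .
    then have "(real k+1) * r^2 - 2 * n * x * r \<ge> 2 * real m+real k+1"
      by (simp add: mult_le_cancel_left_pos)
    then show False using Qr' by linarith
  qed
  show ?thesis using main unfolding r_def n_def s_def by (simp add: add.commute)
qed

lemma ineq2:
  fixes m k :: nat and x r1 :: real
  assumes x: "x > 0" and r1: "r1 > 0"
    and b: "r1 < real (m+k+1)/real(k+1) * (x + sqrt (1 + x^2 - (real m)^2/(real (m+k+1))^2))"
  shows "1 / real (k+2) * (real (m+k+2) * x + real (m+k+1) * sqrt (1 + x^2 - (real m)^2/(real (m+k+1))^2))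
     < ((2 * real m+2 * real k+3) * x + (2 * real m+real k+1)/r1) / (real k+2)"
proof -
  define N where "N = real (m+k+1)"
  define s where "s = sqrt (1 + x^2 - (real m)^2/(real (m+k+1))^2)"
  have s0: "s \<ge> 0" and s2: "s^2 = 1 + x^2 - (real m)^2/N^2"
    using sq_s[of m "m+k+1" x] unfolding s_def N_def by auto
  have N0: "N > 0" unfolding N_def by simp
  have key: "N * (s - x) < (2 * real m+real k+1)/r1"
  proof (cases "s \<le> x")
    case True
    then have "N * (s-x) \<le> 0" using N0 by (simp add: mult_nonneg_nonpos)
    moreover have "(2 * real m+real k+1)/r1 > 0" using r1 by simp
    ultimately show ?thesis by linarith
  next
    case False
    then have sx: "s - x > 0" by simp
    have b': "r1 * (real k+1) < N * (x+s)" using b unfolding N_def s_def by (simp add: field_simps)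
    have "N * (s-x) * (r1 * (real k+1)) < N * (s-x) * (N * (x+s))"
      using b' N0 sx by (simp add: mult_strict_left_mono)
    also have "N * (s-x) * (N * (x+s)) = N^2 * s^2 - N^2 * x^2" by (simp add: algebra_simps power2_eq_square)
    also have "\<dots> = N^2 - (real m)^2" using N0 unfolding s2 by (simp add: field_simps)
    also have "\<dots> = (real k+1) * (2 * real m+real k+1)" unfolding N_def by (simp add: algebra_simps power2_eq_square)
    finally have "(real k+1) * (N * (s-x) * r1) < (real k+1) * (2 * real m+real k+1)" by (simp add: mult_ac)
    then have "N * (s-x) * r1 < 2 * real m+real k+1" by (simp add: mult_less_cancel_left_pos)
    then show ?thesis using r1 by (simp add: field_simps)
  qed
  have "real (m+k+2) * x + N * s < (2 * real m+2 * real k+3) * x + (2 * real m+real k+1)/r1"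
    using key unfolding N_def by (simp add: algebra_simps)
  then have "(real (m+k+2) * x + N * s) / (real k + 2) < ((2 * real m+2 * real k+3) * x + (2 * real m+real k+1)/r1) / (real k+2)"
    by (rule divide_strict_right_mono) simp
  moreover have "1 / real (k+2) * (real (m+k+2) * x + real (m+k+1) * s) = (real (m+k+2) * x + N * s) / (real k + 2)"
    unfolding N_def by simp
  ultimately show ?thesis unfolding s_def by simp
qed

lemma ineq3:
  fixes m k :: nat and x u v :: real
  assumes x: "x > 0" and u: "u > 0" and v: "v > 0"
    and Q: "(real k+1) * u^2 - 2 * (real m+real k+1) * x * u * v - (2 * real m+real k+1) * v^2 < 0"
  shows "u^2 / (v * (((2 * real m+2 * real k+3) * x * u + (2 * real m+real k+1) * v)/(real k+2))) < 1 + 1/real (k+1)"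
proof -
  define W where "W = (2 * real m+2 * real k+3) * x * u + (2 * real m+real k+1) * v"
  have w: "W > 0" unfolding W_def using x u v by (simp add: add_pos_nonneg)
  have "(real k+1) * u^2 < 2 * (real m+real k+1) * x * u * v + (2 * real m+real k+1) * v^2" using Q by simp
  also have "\<dots> \<le> v * W"
    unfolding W_def using x u v by (simp add: algebra_simps power2_eq_square)
  finally have h: "(real k+1) * u^2 < v * W" .
  have vw: "v * W > 0" using v w by simp
  have k1: "real k + 1 > 0" by simp
  have e1: "u^2 / (v * (W/(real k+2))) = (real k+2) * u^2 / (v * W)" by simp
  have h2: "(real k+2) * ((real k+1) * u^2) < (real k+2)* (v * W)" using h by simp
  have "(real k+2) * u^2 / (v * W) < (real k+2)/(real k+1)"
    using h2 vw k1 by (simp add: divide_less_eq less_divide_eq mult_ac)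
  also have "\<dots> = 1 + 1/real (k+1)" using k1 by (simp add: field_simps)
  finally have "u^2 / (v * (W/(real k+2))) < 1 + 1/real (k+1)" unfolding e1 .
  then show ?thesis unfolding W_def .
qed


lemma AL_gen:
  fixes x :: real
  defines "z \<equiv> \<i> * complex_of_real x"
  shows "assoc_legendreP (m+j) m z = ((csqrt (z + 1) * csqrt (z - 1)) ^ m * cc m) * \<i>^j * complex_of_real (poly (qq m j) x)"
  unfolding assoc_legendreP_def z_def using conjunct1[OF link_pair[of m j x]] by (simp add: mult.assoc)

lemma K_nz:
  fixes x :: real
  shows "(csqrt (\<i> * complex_of_real x + 1) * csqrt (\<i> * complex_of_real x - 1)) ^ m * cc m \<noteq> 0"
proof -
  have a: "\<i> * complex_of_real x + 1 \<noteq> 0"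
  proof
    assume "\<i> * complex_of_real x + 1 = 0"
    then have "Re (\<i> * complex_of_real x + 1) = 0" by simp
    then show False by simp
  qed
  have b: "\<i> * complex_of_real x - 1 \<noteq> 0"
  proof
    assume "\<i> * complex_of_real x - 1 = 0"
    then have "Re (\<i> * complex_of_real x - 1) = 0" by simp
    then show False by simp
  qed
  show ?thesis using a b cc_nz by simp
qed

lemma ratio_eq:
  fixes x :: real and K :: complex and a b :: real
  assumes "K \<noteq> 0" "b \<noteq> 0"
  shows "- \<i> * (K * \<i>^(Suc j) * complex_of_real a) / (K * \<i>^j * complex_of_real b) = complex_of_real (a / b)"
proof -
  have "\<i>^j \<noteq> 0" by simp
  then show ?thesis using assms by (simp add: field_simps)
qed

lemma tur_eq:
  fixes K :: complex and a b c :: real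
  assumes "K \<noteq> 0" "b \<noteq> 0" "c \<noteq> 0"
  shows "(K * \<i>^(Suc j) * complex_of_real a)^2 / ((K * \<i>^j * complex_of_real b) * (K * \<i>^(Suc (Suc j)) * complex_of_real c))
     = complex_of_real (a^2 / (b * c))"
proof -
  have "\<i>^j \<noteq> 0" by simp
  then show ?thesis using assms by (simp add: field_simps power2_eq_square)
qed

theorem theorem17:
  fixes n m :: nat and x :: real
  assumes "x > 0" and "m < n"
  shows "(odd (n - m) \<longrightarrow>
            (let r = - \<i> * assoc_legendreP n m (\<i> * of_real x) / assoc_legendreP (n - 1) m (\<i> * of_real x)
             in Im r = 0 \<and> 0 < Re r \<and>
                Re r < real n / real (n - m) * (x + sqrt (1 + x\<^sup>2 - (real m)\<^sup>2 / (real n)\<^sup>2))))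
       \<and> (even (n - m) \<longrightarrow>
            (let r = - \<i> * assoc_legendreP n m (\<i> * of_real x) / assoc_legendreP (n - 1) m (\<i> * of_real x)
             in Im r = 0 \<and>
                1 / real (n - m) * (real n * x + real (n - 1) * sqrt (1 + x\<^sup>2 - (real m)\<^sup>2 / (real (n - 1))\<^sup>2)) < Re r))
       \<and> (odd (n - m) \<longrightarrow>
            (let q = assoc_legendreP n m (\<i> * of_real x) ^ 2 /
                     (assoc_legendreP (n - 1) m (\<i> * of_real x) * assoc_legendreP (n + 1) m (\<i> * of_real x))
             in Im q = 0 \<and> Re q < 1 + 1 / real (n - m)))"
proof -
  define K where "K = (csqrt (\<i> * complex_of_real x + 1) * csqrt (\<i> * complex_of_real x - 1)) ^ m * cc m"
  have Knz: "K \<noteq> 0" unfolding K_def by (rule K_nz)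
  have AL: "\<And>j. assoc_legendreP (m+j) m (\<i> * of_real x) = K * \<i>^j * complex_of_real (poly (qq m j) x)"
    unfolding K_def by (rule AL_gen)
  have pos: "poly (qq m j) x > 0" for j using qq_pos[OF assms(1), of m j] by simp
  show ?thesis
  proof (rule conjI[OF impI conjI[OF impI impI]])
    assume od: "odd (n - m)"
    define k where "k = n - m - 1"
    have nk: "n = m + Suc k" unfolding k_def using assms(2) by arith
    have ek: "even k" using od nk by simp
    have n1: "n - 1 = m + k" using nk by simp
    have nm: "n - m = Suc k" using nk by simp
    define u where "u = poly (qq m (Suc k)) x"
    define v where "v = poly (qq m k) x"
    have u0: "u > 0" and v0: "v > 0" unfolding u_def v_def using pos by auto
    have Q: "(real k+1) * u^2 - 2 * (real m+real k+1) * x * u * v - (2 * real m+real k+1) * v^2 < 0"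
      using Q_neg[OF ek, of x m] assms(1) unfolding Qf_def u_def v_def by simp
    have r: "- \<i> * assoc_legendreP n m (\<i> * of_real x) / assoc_legendreP (n - 1) m (\<i> * of_real x)
       = complex_of_real (u / v)"
      unfolding n1 unfolding nk AL u_def v_def using Knz pos[of k] by (intro ratio_eq) auto
    have b1: "u/v < real (m+k+1)/real(k+1) * (x + sqrt (1 + x^2 - (real m)^2/(real (m+k+1))^2))"
      by (rule ineq1[OF assms(1) u0 v0 Q])
    show "let r = - \<i> * assoc_legendreP n m (\<i> * of_real x) / assoc_legendreP (n - 1) m (\<i> * of_real x)
             in Im r = 0 \<and> 0 < Re r \<and>
                Re r < real n / real (n - m) * (x + sqrt (1 + x\<^sup>2 - (real m)\<^sup>2 / (real n)\<^sup>2))"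
      unfolding Let_def r using u0 v0 b1 unfolding nm nk by simp
  next
    assume ev: "even (n - m)"
    have "n - m \<noteq> 1"
    proof
      assume h: "n - m = 1"
      have "even (1::nat)" using ev unfolding h .
      then show False by simp
    qed
    then have ge2: "n - m \<ge> 2" using assms(2) by arith
    define k where "k = n - m - 2"
    have nk: "n = m + Suc (Suc k)" unfolding k_def using ge2 by arith
    have ek: "even k" using ev nk by simp
    have n1: "n - 1 = m + Suc k" using nk by simp
    have nm: "n - m = Suc (Suc k)" using nk by simp
    define u where "u = poly (qq m (Suc k)) x"
    define v where "v = poly (qq m k) x"
    define w where "w = poly (qq m (Suc (Suc k))) x"
    have u0: "u > 0" unfolding u_def by (rule pos)
    have v0: "v > 0" unfolding v_def by (rule pos)
    have w0: "w > 0" unfolding w_def by (rule pos)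
    have Q: "(real k+1) * u^2 - 2 * (real m+real k+1) * x * u * v - (2 * real m+real k+1) * v^2 < 0"
      using Q_neg[OF ek, of x m] assms(1) unfolding Qf_def u_def v_def by simp
    have b1: "u/v < real (m+k+1)/real(k+1) * (x + sqrt (1 + x^2 - (real m)^2/(real (m+k+1))^2))"
      by (rule ineq1[OF assms(1) u0 v0 Q])
    have r1: "u/v > 0" using u0 v0 by simp
    have wu: "w / u = ((2 * real m+2 * real k+3) * x + (2 * real m+real k+1)/(u/v)) / (real k+2)"
      unfolding w_def qq_SS u_def[symmetric] v_def[symmetric] using u0 v0 by (simp add: field_simps)
    have r: "- \<i> * assoc_legendreP n m (\<i> * of_real x) / assoc_legendreP (n - 1) m (\<i> * of_real x)
       = complex_of_real (w / u)"
      unfolding n1 unfolding nk AL u_def w_def using Knz pos[of "Suc k"] by (intro ratio_eq) auto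
    show "let r = - \<i> * assoc_legendreP n m (\<i> * of_real x) / assoc_legendreP (n - 1) m (\<i> * of_real x)
             in Im r = 0 \<and>
                1 / real (n - m) * (real n * x + real (n - 1) * sqrt (1 + x\<^sup>2 - (real m)\<^sup>2 / (real (n - 1))\<^sup>2)) < Re r"
      unfolding Let_def r using ineq2[OF assms(1) r1 b1] unfolding wu[symmetric] nm n1 unfolding nk by simp

  next
    assume od: "odd (n - m)"
    define k where "k = n - m - 1"
    have nk: "n = m + Suc k" unfolding k_def using assms(2) by arith
    have ek: "even k" using od nk by simp
    have n1: "n - 1 = m + k" using nk by simp
    have n2: "n + 1 = m + Suc (Suc k)" using nk by simp
    have nm: "n - m = Suc k" using nk by simp
    define u where "u = poly (qq m (Suc k)) x"
    define v where "v = poly (qq m k) x"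
    have u0: "u > 0" and v0: "v > 0" unfolding u_def v_def using pos by auto
    have w: "poly (qq m (Suc (Suc k))) x = ((2 * real m+2 * real k+3) * x * u + (2 * real m+real k+1) * v)/(real k+2)"
      unfolding qq_SS u_def v_def by simp
    have Q: "(real k+1) * u^2 - 2 * (real m+real k+1) * x * u * v - (2 * real m+real k+1) * v^2 < 0"
      using Q_neg[OF ek, of x m] assms(1) unfolding Qf_def u_def v_def by simp
    have q: "assoc_legendreP n m (\<i> * of_real x) ^ 2 /
                     (assoc_legendreP (n - 1) m (\<i> * of_real x) * assoc_legendreP (n + 1) m (\<i> * of_real x))
           = complex_of_real (u^2 / (v * (((2 * real m+2 * real k+3) * x * u + (2 * real m+real k+1) * v)/(real k+2))))"
      unfolding n1 n2 unfolding nk AL u_def[symmetric] v_def[symmetric] w[symmetric]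
      using Knz pos[of k] pos[of "Suc (Suc k)"] v0 by (intro tur_eq) auto
    show "let q = assoc_legendreP n m (\<i> * of_real x) ^ 2 /
                     (assoc_legendreP (n - 1) m (\<i> * of_real x) * assoc_legendreP (n + 1) m (\<i> * of_real x))
             in Im q = 0 \<and> Re q < 1 + 1 / real (n - m)"
      unfolding Let_def q using ineq3[OF assms(1) u0 v0 Q] unfolding nm by simp
  qed
qed


end
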